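(* Let $\mathsf{H}^\ast$ be a clique coverage of $\mathrm{G}$ with $|\mathsf{H}^\ast|=d$, let $(\mathrm{Q}_1,\dots,\mathrm{Q}_d)$ be an ordering of $\mathsf{H}^\ast$ in which every clique appears exactly once, and let $\mathbf{M}_{\mathrm{C}}$, $\mathrm{C}\in\mathsf{H}^\ast$, be clique-gossip matrices with arbitrary blocks. If the generalized line graph $\mathcal{L}(\mathsf{H}^\ast)$ contains no cycle, then for every permutation $\pi$ of $\{1,\dots,d\}$ the matrices $\mathbf{F}=\mathbf{M}_{\mathrm{Q}_d}\cdots\mathbf{M}_{\mathrm{Q}_1}$ and $\mathbf{F}_\pi=\mathbf{M}_{\mathrm{Q}_{\pi(d)}}\cdots\mathbf{M}_{\mathrm{Q}_{\pi(1)}}$ have the same characteristic polynomial.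
   Context: $\mathrm{G}=(\mathrm{V},\mathrm{E})$ is a simple undirected graph with $\mathrm{V}=\{1,\dots,n\}$; $\mathrm{G}[\mathrm{S}]$ is the induced subgraph on $\mathrm{S}\subset\mathrm{V}$. A clique is a subset $\mathrm{C}\subset\mathrm{V}$ with $\mathrm{G}[\mathrm{C}]$ complete. A clique coverage of $\mathrm{G}$ is a finite set $\mathsf{H}^\ast$ of cliques whose union is $\mathrm{V}$ and whose union graph $\bigcup_{\mathrm{C}\in\mathsf{H}^\ast}\mathrm{G}[\mathrm{C}]$ is connected. The generalized line graph $\mathcal{L}(\mathsf{H}^\ast)$ has vertex set $\mathsf{H}^\ast$, with distinct $\mathrm{C},\mathrm{C}'$ joined iff $\mathrm{C}\cap\mathrm{C}'\neq\emptyset$; cycles are meant in the usual graph-theoretic sense. Fix $b\ge1$. A clique-gossip matrix for a clique $\mathrm{C}$ is a block matrix $\mathbf{M}_{\mathrm{C}}\in\mathbb{R}^{nb\times nb}$ with $b\times b$ blocks, whose $(i,j)$ block equals an arbitrary matrix $\mathbf{A}_{ij}(\mathrm{C})\in\mathbb{R}^{b\times b}$ when $i,j\in\mathrm{C}$, equals $\mathbf{I}_b$ when $i=j\notin\mathrm{C}$, and equals $\mathbf{0}_b$ otherwise. *)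

theory Defs
  imports "Jordan_Normal_Form.Char_Poly" "HOL-Combinatorics.Permutations"
begin

definition simple_graph :: "nat \<Rightarrow> (nat \<Rightarrow> nat \<Rightarrow> bool) \<Rightarrow> bool" where
  "simple_graph n E \<longleftrightarrow>
     (\<forall>i j. E i j \<longrightarrow> i \<in> {1..n} \<and> j \<in> {1..n}) \<and>
     (\<forall>i j. E i j \<longrightarrow> E j i) \<and> (\<forall>i. \<not> E i i)"

definition is_clique :: "nat \<Rightarrow> (nat \<Rightarrow> nat \<Rightarrow> bool) \<Rightarrow> nat set \<Rightarrow> bool" where
  "is_clique n E C \<longleftrightarrow> C \<subseteq> {1..n} \<and> (\<forall>i\<in>C. \<forall>j\<in>C. i \<noteq> j \<longrightarrow> E i j)"

definition union_adj :: "nat set set \<Rightarrow> nat \<Rightarrow> nat \<Rightarrow> bool" where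
  "union_adj H i j \<longleftrightarrow> i \<noteq> j \<and> (\<exists>C\<in>H. i \<in> C \<and> j \<in> C)"

definition clique_coverage :: "nat \<Rightarrow> (nat \<Rightarrow> nat \<Rightarrow> bool) \<Rightarrow> nat set set \<Rightarrow> bool" where
  "clique_coverage n E H \<longleftrightarrow>
     finite H \<and> (\<forall>C\<in>H. is_clique n E C) \<and> \<Union>H = {1..n} \<and>
     (\<forall>i\<in>{1..n}. \<forall>j\<in>{1..n}. (union_adj H)\<^sup>*\<^sup>* i j)"

definition line_adj :: "nat set set \<Rightarrow> nat set \<Rightarrow> nat set \<Rightarrow> bool" where
  "line_adj H C C' \<longleftrightarrow> C \<in> H \<and> C' \<in> H \<and> C \<noteq> C' \<and> C \<inter> C' \<noteq> {}"

definition line_graph_has_cycle :: "nat set set \<Rightarrow> bool" where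
  "line_graph_has_cycle H \<longleftrightarrow>
     (\<exists>cs. length cs \<ge> 3 \<and> distinct cs \<and> set cs \<subseteq> H \<and>
        (\<forall>k < length cs. line_adj H (cs ! k) (cs ! ((k + 1) mod length cs))))"

(* Block indexing: row r of an (nb x nb) matrix lies in block row r div b + 1
   (vertex in {1..n}) at position r mod b inside the block. *)
definition clique_gossip :: "nat \<Rightarrow> nat \<Rightarrow> nat set \<Rightarrow> real mat \<Rightarrow> bool" where
  "clique_gossip n b C M \<longleftrightarrow>
     M \<in> carrier_mat (n * b) (n * b) \<and>
     (\<forall>r < n * b. \<forall>c < n * b.
        let i = r div b + 1; j = c div b + 1 in
        \<not> (i \<in> C \<and> j \<in> C) \<longrightarrow>
          M $$ (r, c) = (if i = j \<and> r mod b = c mod b then 1 else 0))"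

fun ordered_prod :: "nat \<Rightarrow> (nat set \<Rightarrow> real mat) \<Rightarrow> (nat \<Rightarrow> nat set) \<Rightarrow> nat \<Rightarrow> real mat" where
  "ordered_prod N M f 0 = 1\<^sub>m N"
| "ordered_prod N M f (Suc k) = M (f (Suc k)) * ordered_prod N M f k"

end

theory Submission
  imports Defs
begin


interpretation cpoly: comm_ring_hom "\<lambda>x::real. [:x:]"
  by unfold_locales (auto simp: one_pCons)

lemma char_poly_matrix_alt:
  assumes A: "A \<in> carrier_mat n n"
  shows "char_poly_matrix A = [:0,1:] \<cdot>\<^sub>m 1\<^sub>m n - map_mat (\<lambda>x::real. [:x:]) A"
  using A unfolding char_poly_matrix_def by (intro eq_matI) auto

lemma char_poly_mult_comm:
  fixes A B :: "real mat"
  assumes A: "A \<in> carrier_mat n n" and B: "B \<in> carrier_mat n n"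
  shows "char_poly (A * B) = char_poly (B * A)"
proof -
  define X where "X = ([:0,1:] :: real poly) \<cdot>\<^sub>m 1\<^sub>m n"
  define A' where "A' = map_mat (\<lambda>x::real. [:x:]) A"
  define B' where "B' = map_mat (\<lambda>x::real. [:x:]) B"
  have X: "X \<in> carrier_mat n n" and A': "A' \<in> carrier_mat n n" and B': "B' \<in> carrier_mat n n"
    using A B by (auto simp: X_def A'_def B'_def)
  have XA: "X * A' = A' * X" "X * B' = B' * X" using A' B' unfolding X_def
    by (auto simp: mult_smult_distrib[of _ n n] mult_smult_assoc_mat[of _ n n])
  define M where "M = four_block_mat X A' B' (1\<^sub>m n)"
  define P where "P = four_block_mat (1\<^sub>m n) (-A') (0\<^sub>m n n) X"
  have M: "M \<in> carrier_mat (n+n) (n+n)" and P: "P \<in> carrier_mat (n+n) (n+n)"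
    using X A' B' by (auto simp: M_def P_def)
  have PM: "P * M = four_block_mat (X - A' * B') (0\<^sub>m n n) (X * B') X"
    unfolding P_def M_def
    by (subst mult_four_block_mat[OF one_carrier_mat uminus_carrier_mat[OF A'] zero_carrier_mat X X A' B' one_carrier_mat],
        insert X A' B', auto simp: minus_add_uminus_mat)
  have MP: "M * P = four_block_mat X (0\<^sub>m n n) B' (X - B' * A')"
    unfolding P_def M_def
    by (subst mult_four_block_mat[OF X A' B' one_carrier_mat one_carrier_mat uminus_carrier_mat[OF A'] zero_carrier_mat X],
        insert X A' B' XA, auto simp: minus_add_uminus_mat)
  have "det (X - A' * B') * det X = det (P * M)"
    unfolding PM by (subst det_four_block_mat_upper_right_zero[of _ n _ n]) (insert X A' B', auto)
  also have "\<dots> = det (M * P)" using det_mult[OF P M] det_mult[OF M P] by (simp add: mult.commute)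
  also have "\<dots> = det X * det (X - B' * A')"
    unfolding MP by (subst det_four_block_mat_upper_right_zero[of _ n _ n]) (insert X A' B', auto)
  finally have eq: "det (X - A' * B') * det X = det X * det (X - B' * A')" .
  have "det X \<noteq> 0" unfolding X_def by (simp add: det_smult)
  with eq have "det (X - A' * B') = det (X - B' * A')" by (simp add: mult.commute)
  moreover have "char_poly (A * B) = det (X - A' * B')"
    unfolding char_poly_def X_def A'_def B'_def
    by (subst char_poly_matrix_alt[of _ n], insert A B, auto simp: cpoly.mat_hom_mult)
  moreover have "char_poly (B * A) = det (X - B' * A')"
    unfolding char_poly_def X_def A'_def B'_def
    by (subst char_poly_matrix_alt[of _ n], insert A B, auto simp: cpoly.mat_hom_mult)
  ultimately show ?thesis by simp
qed


definition lp :: "nat \<Rightarrow> ('a \<Rightarrow> real mat) \<Rightarrow> 'a list \<Rightarrow> real mat" where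
  "lp N x ws = foldr (\<lambda>i A. x i * A) ws (1\<^sub>m N)"

lemma lp_Nil[simp]: "lp N x [] = 1\<^sub>m N" and lp_Cons[simp]: "lp N x (i # ws) = x i * lp N x ws"
  by (auto simp: lp_def)

lemma lp_carrier: "(\<And>i. i \<in> set ws \<Longrightarrow> x i \<in> carrier_mat N N) \<Longrightarrow> lp N x ws \<in> carrier_mat N N"
  by (induction ws) (auto intro!: mult_carrier_mat)

lemma lp_append: "(\<And>i. i \<in> set (xs @ ys) \<Longrightarrow> x i \<in> carrier_mat N N) \<Longrightarrow>
   lp N x (xs @ ys) = lp N x xs * lp N x ys"
proof (induction xs)
  case Nil then show ?case using lp_carrier[of ys x N] by simp
next
  case (Cons a xs)
  then show ?case
    by (simp, subst assoc_mult_mat[of _ N N _ N _ N], auto intro: lp_carrier)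
qed

lemma lp_cong: "(\<And>i. i \<in> set ws \<Longrightarrow> x i = y i) \<Longrightarrow> lp N x ws = lp N y ws"
  by (induction ws) auto

lemma lp_commute:
  assumes "x l \<in> carrier_mat N N" "\<And>q. q \<in> set U \<Longrightarrow> x q \<in> carrier_mat N N \<and> x l * x q = x q * x l"
  shows "x l * lp N x U = lp N x U * x l"
  using assms(2)
proof (induction U)
  case Nil then show ?case using assms(1) by simp
next
  case (Cons a U)
  have a: "x a \<in> carrier_mat N N" "x l * x a = x a * x l" using Cons.prems by auto
  have U: "lp N x U \<in> carrier_mat N N" using Cons.prems by (intro lp_carrier) auto
  have IH: "x l * lp N x U = lp N x U * x l" using Cons by auto
  have "x l * lp N x (a # U) = x l * (x a * lp N x U)" by simp
  also have "\<dots> = (x l * x a) * lp N x U"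
    by (rule assoc_mult_mat[symmetric, OF assms(1) a(1) U])
  also have "\<dots> = (x a * x l) * lp N x U" using a(2) by simp
  also have "\<dots> = x a * (x l * lp N x U)"
    by (rule assoc_mult_mat[OF a(1) assms(1) U])
  also have "\<dots> = x a * (lp N x U * x l)" using IH by simp
  also have "\<dots> = (x a * lp N x U) * x l"
    by (rule assoc_mult_mat[symmetric, OF a(1) U assms(1)])
  finally show ?case by simp
qed



lemma key_step:
  assumes l: "l \<in> I" and p: "p \<in> I" "l \<noteq> p"
  and comm: "\<forall>q\<in>I. q \<noteq> l \<longrightarrow> q \<noteq> p \<longrightarrow> x l * x q = x q * x l"
  and car: "\<forall>i\<in>I. x i \<in> carrier_mat N N"
  and ws: "distinct ws" "set ws = I"
  shows "\<exists>ws0. distinct ws0 \<and> set ws0 = I - {l} \<and>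
           char_poly (lp N x ws) = char_poly (lp N (x(p := x l * x p)) ws0)"
proof -
  define x' where "x' = x(p := x l * x p)"
  have cl: "x l \<in> carrier_mat N N" and cp: "x p \<in> carrier_mat N N" using car l p by auto
  have clp: "x l * x p \<in> carrier_mat N N" using cl cp by auto
  have lpc: "set ys \<subseteq> I \<Longrightarrow> lp N x ys \<in> carrier_mat N N" for ys
    using car by (intro lp_carrier) auto
  have lpapp: "set ys \<subseteq> I \<Longrightarrow> set zs \<subseteq> I \<Longrightarrow> lp N x (ys @ zs) = lp N x ys * lp N x zs" for ys zs
    using car by (intro lp_append) auto
  have lpx': "p \<notin> set ys \<Longrightarrow> lp N x' ys = lp N x ys" for ys
    unfolding x'_def by (rule lp_cong) auto
  have lcomm: "set U \<subseteq> I \<Longrightarrow> l \<notin> set U \<Longrightarrow> p \<notin> set U \<Longrightarrow> x l * lp N x U = lp N x U * x l" for U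
    using comm car cl by (intro lp_commute) auto
  from ws l obtain A R where wsAR: "ws = A @ l # R" by (metis split_list)
  have pin: "p \<in> set A \<or> p \<in> set R" using p ws wsAR by auto
  show ?thesis
  proof (cases "p \<in> set R")
    case True
    then obtain B D where RBD: "R = B @ p # D" by (metis split_list)
    have sets: "set A \<subseteq> I" "set B \<subseteq> I" "set D \<subseteq> I" "l \<notin> set A" "l \<notin> set B" "l \<notin> set D"
      "p \<notin> set A" "p \<notin> set B" "p \<notin> set D"
      using ws wsAR RBD by auto
    note cA = lpc[OF sets(1)] and cB = lpc[OF sets(2)] and cD = lpc[OF sets(3)]
    have "lp N x ws = lp N x A * (x l * (lp N x B * (x p * lp N x D)))"
      unfolding wsAR RBD using sets l p by (simp add: lpapp)
    also have "x l * (lp N x B * (x p * lp N x D)) = (x l * lp N x B) * (x p * lp N x D)"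
      using cl cB cp cD by (simp add: assoc_mult_mat[of _ N N _ N _ N])
    also have "\<dots> = (lp N x B * x l) * (x p * lp N x D)" using lcomm[OF sets(2,5,8)] by simp
    also have "\<dots> = lp N x B * ((x l * x p) * lp N x D)"
      using cl cB cp cD by (simp add: assoc_mult_mat[of _ N N _ N _ N])
    also have "lp N x A * (lp N x B * ((x l * x p) * lp N x D)) = lp N x' (A @ B @ p # D)"
      using sets l p car by (subst lp_append[of _ _ x' N], force simp: x'_def,
        subst lp_append[of _ _ x' N], force simp: x'_def, simp add: lpx', simp add: x'_def right_mult_one_mat[OF clp])
    finally have eq: "lp N x ws = lp N x' (A @ B @ p # D)" .
    show ?thesis unfolding x'_def[symmetric]
      by (rule exI[of _ "A @ B @ p # D"], insert ws wsAR RBD eq, auto)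
  next
    case False
    with pin obtain B C where ABC: "A = B @ p # C" by (metis split_list)
    have sets: "set B \<subseteq> I" "set C \<subseteq> I" "set R \<subseteq> I" "l \<notin> set B" "l \<notin> set C" "l \<notin> set R"
      "p \<notin> set B" "p \<notin> set C" "p \<notin> set R"
      using ws wsAR ABC False by auto
    note cB = lpc[OF sets(1)] and cC = lpc[OF sets(2)] and cR = lpc[OF sets(3)]
    define Y where "Y = lp N x (C @ R @ B)"
    have sY: "set (C @ R @ B) \<subseteq> I" "l \<notin> set (C @ R @ B)" "p \<notin> set (C @ R @ B)" using sets by auto
    have cY: "Y \<in> carrier_mat N N" unfolding Y_def using lpc[OF sY(1)] .
    have "lp N x ws = lp N x B * (x p * (lp N x C * (x l * lp N x R)))"
      unfolding wsAR ABC using sets l p by (simp add: lpapp)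
    also have "\<dots> = (lp N x B * x p) * (x l * (lp N x C * lp N x R))"
    proof -
      have "lp N x C * (x l * lp N x R) = (lp N x C * x l) * lp N x R"
        using cl cC cR by (simp add: assoc_mult_mat[of _ N N _ N _ N])
      also have "\<dots> = (x l * lp N x C) * lp N x R" using lcomm[OF sets(2,5,8)] by simp
      also have "\<dots> = x l * (lp N x C * lp N x R)"
        using cl cC cR by (simp add: assoc_mult_mat[of _ N N _ N _ N])
      finally show ?thesis using cB cp cl cC cR
        by (simp add: assoc_mult_mat[of _ N N _ N _ N])
    qed
    finally have e1: "char_poly (lp N x ws) = char_poly ((x l * (lp N x C * lp N x R)) * (lp N x B * x p))"
      using cB cp cl cC cR by (simp add: char_poly_mult_comm[of _ N])
    have "(x l * (lp N x C * lp N x R)) * (lp N x B * x p) = x l * (Y * x p)"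
      unfolding Y_def using sets cB cp cl cC cR
      by (simp add: lpapp assoc_mult_mat[of _ N N _ N _ N])
    also have "\<dots> = (x l * Y) * x p" using cl cY cp by (simp add: assoc_mult_mat[of _ N N _ N _ N])
    also have "\<dots> = (Y * x l) * x p" unfolding Y_def using lcomm[OF sY] by simp
    also have "\<dots> = Y * (x l * x p)" using cl cY cp by (simp add: assoc_mult_mat[of _ N N _ N _ N])
    also have "\<dots> = lp N x' ((C @ R @ B) @ [p])"
      unfolding Y_def using sY clp car
      by (subst lp_append[of _ _ x' N], force simp: x'_def, simp add: lpx', simp add: x'_def right_mult_one_mat[OF clp])
    finally have "char_poly (lp N x ws) = char_poly (lp N x' ((C @ R @ B) @ [p]))" using e1 by simp
    then show ?thesis unfolding x'_def[symmetric]
      by (intro exI[of _ "(C @ R @ B) @ [p]"], insert ws wsAR ABC, auto)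
  qed
qed



definition degen :: "('a \<Rightarrow> 'a \<Rightarrow> bool) \<Rightarrow> 'a set \<Rightarrow> bool" where
 "degen adj I \<longleftrightarrow> (\<forall>J\<subseteq>I. 2 \<le> card J \<longrightarrow>
     (\<exists>l\<in>J. \<exists>p\<in>J. l \<noteq> p \<and> (\<forall>q\<in>J. q \<noteq> l \<longrightarrow> q \<noteq> p \<longrightarrow> \<not> adj l q)))"

lemma comm3:
  assumes "A \<in> carrier_mat N N" "B \<in> carrier_mat N N" "C \<in> carrier_mat N N"
    "B * C = C * B" "A * C = C * A"
  shows "(A * B) * C = C * (A * B)"
proof -
  have "(A * B) * C = A * (B * C)" by (rule assoc_mult_mat[OF assms(1-3)])
  also have "\<dots> = A * (C * B)" using assms(4) by simp
  also have "\<dots> = (A * C) * B" by (rule assoc_mult_mat[symmetric, OF assms(1,3,2)])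
  also have "\<dots> = (C * A) * B" using assms(5) by simp
  also have "\<dots> = C * (A * B)" by (rule assoc_mult_mat[OF assms(3,1,2)])
  finally show ?thesis .
qed

lemma short_lists_eq:
  assumes "distinct ws" "distinct ws'" "set ws = set ws'" "card (set ws) < 2"
  shows "ws = ws'"
proof -
  have "length ws = length ws'" using assms distinct_card by metis
  moreover have "length ws < 2" using assms distinct_card by metis
  ultimately show ?thesis using assms(3)
    by (cases ws; cases ws'; auto)
qed

lemma forest_charpoly:
  assumes "finite I" "degen adj I" "\<forall>i\<in>I. x i \<in> carrier_mat N N"
   "\<forall>i\<in>I. \<forall>j\<in>I. i \<noteq> j \<longrightarrow> \<not> adj i j \<longrightarrow> x i * x j = x j * x i"
   "distinct ws" "set ws = I" "distinct ws'" "set ws' = I"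
  shows "char_poly (lp N x ws) = char_poly (lp N x ws')"
  using assms
proof (induction "card I" arbitrary: I x ws ws' rule: less_induct)
  case less
  show ?case
  proof (cases "card I < 2")
    case True
    then have "ws = ws'" using less.prems by (intro short_lists_eq) auto
    then show ?thesis by simp
  next
    case False
    have "\<exists>l\<in>I. \<exists>p\<in>I. l \<noteq> p \<and> (\<forall>q\<in>I. q \<noteq> l \<longrightarrow> q \<noteq> p \<longrightarrow> \<not> adj l q)"
      using spec[OF less.prems(2)[unfolded degen_def], of I] False by simp
    then obtain l p where lp: "l \<in> I" "p \<in> I" "l \<noteq> p"
      and nadj: "\<forall>q\<in>I. q \<noteq> l \<longrightarrow> q \<noteq> p \<longrightarrow> \<not> adj l q"
      by blast
    have comm: "\<forall>q\<in>I. q \<noteq> l \<longrightarrow> q \<noteq> p \<longrightarrow> x l * x q = x q * x l"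
    proof (intro ballI impI)
      fix q assume q: "q \<in> I" "q \<noteq> l" "q \<noteq> p"
      have "\<not> adj l q" using nadj q by blast
      moreover have "l \<noteq> q" using q by simp
      ultimately show "x l * x q = x q * x l" using less.prems(4)[rule_format, OF lp(1) q(1)] by simp
    qed
    define x' where "x' = x(p := x l * x p)"
    obtain ws0 where ws0: "distinct ws0" "set ws0 = I - {l}"
      "char_poly (lp N x ws) = char_poly (lp N x' ws0)"
      using key_step[OF lp comm less.prems(3,5,6)] unfolding x'_def by blast
    obtain ws0' where ws0': "distinct ws0'" "set ws0' = I - {l}"
      "char_poly (lp N x ws') = char_poly (lp N x' ws0')"
      using key_step[OF lp comm less.prems(3,7,8)] unfolding x'_def by blast
    have car': "\<forall>i\<in>I - {l}. x' i \<in> carrier_mat N N"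
      using less.prems(3) lp unfolding x'_def by (auto intro!: mult_carrier_mat)
    have comm': "\<forall>i\<in>I - {l}. \<forall>j\<in>I - {l}. i \<noteq> j \<longrightarrow> \<not> adj i j \<longrightarrow> x' i * x' j = x' j * x' i"
    proof (intro ballI impI)
      fix i j assume ij: "i \<in> I - {l}" "j \<in> I - {l}" "i \<noteq> j" "\<not> adj i j"
      have c: "x l \<in> carrier_mat N N" "x p \<in> carrier_mat N N" "x i \<in> carrier_mat N N" "x j \<in> carrier_mat N N"
        using less.prems(3) lp ij by auto
      show "x' i * x' j = x' j * x' i"
      proof (cases "i = p")
        case True
        have jp: "j \<noteq> p" using True ij by auto
        have e1: "x p * x j = x j * x p"
          using less.prems(4)[rule_format, of p j] True ij lp by auto
        have e2: "x l * x j = x j * x l" using comm ij jp by auto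
        show ?thesis unfolding x'_def using True jp comm3[OF c(1,2,4) e1 e2] by simp
      next
        case False
        show ?thesis
        proof (cases "j = p")
          case True
          have e1: "x i * x p = x p * x i"
            using less.prems(4)[rule_format, of i p] True ij lp False by auto
          have e2: "x l * x i = x i * x l" using comm ij False by auto
          show ?thesis unfolding x'_def using True False comm3[OF c(1,2,3) e1[symmetric] e2] by simp
        next
          case False2: False
          then show ?thesis unfolding x'_def using ij less.prems(4) False by auto
        qed
      qed
    qed
    have "char_poly (lp N x' ws0) = char_poly (lp N x' ws0')"
    proof (rule less.hyps[of "I - {l}"])
      show "card (I - {l}) < card I" using lp less.prems(1) by (metis card_Diff1_less)
      show "degen adj (I - {l})" using less.prems(2) unfolding degen_def by blast
    qed (use less.prems(1) car' comm' ws0 ws0' in auto)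
    then show ?thesis using ws0 ws0' by simp
  qed
qed



lemma acyclic_degen:
  assumes fin: "finite H" and nc: "\<not> line_graph_has_cycle H"
  shows "degen (line_adj H) H"
  unfolding degen_def
proof (intro allI impI)
  fix J assume JH: "J \<subseteq> H" and cJ: "2 \<le> card J"
  let ?adj = "line_adj H"
  have finJ: "finite J" using JH fin finite_subset by auto
  show "\<exists>l\<in>J. \<exists>p\<in>J. l \<noteq> p \<and> (\<forall>q\<in>J. q \<noteq> l \<longrightarrow> q \<noteq> p \<longrightarrow> \<not> ?adj l q)"
  proof (rule ccontr)
    assume "\<not> ?thesis"
    note neg = this
    have ex: "\<exists>q\<in>J. q \<noteq> l \<and> q \<noteq> p \<and> ?adj l q" if "l \<in> J" "p \<in> J" "l \<noteq> p" for l p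
    proof (rule ccontr)
      assume "\<not> (\<exists>q\<in>J. q \<noteq> l \<and> q \<noteq> p \<and> ?adj l q)"
      then have "\<forall>q\<in>J. q \<noteq> l \<longrightarrow> q \<noteq> p \<longrightarrow> \<not> ?adj l q" by blast
      then have "\<exists>l\<in>J. \<exists>p\<in>J. l \<noteq> p \<and> (\<forall>q\<in>J. q \<noteq> l \<longrightarrow> q \<noteq> p \<longrightarrow> \<not> ?adj l q)"
        using that by blast
      with neg show False by (rule notE)
    qed
    define path where "path cs \<longleftrightarrow> cs \<noteq> [] \<and> distinct cs \<and> set cs \<subseteq> J \<and>
        (\<forall>m. Suc m < length cs \<longrightarrow> ?adj (cs ! m) (cs ! Suc m))" for cs
    obtain j where j: "j \<in> J" using cJ by fastforce
    have p0: "path [j]" using j by (simp add: path_def)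
    have bnd: "\<forall>cs. path cs \<longrightarrow> length cs < card J + 1"
    proof (intro allI impI)
      fix cs assume "path cs"
      then have "length cs = card (set cs)" "card (set cs) \<le> card J"
        using distinct_card[of cs] finJ card_mono[of J "set cs"] unfolding path_def by auto
      then show "length cs < card J + 1" by simp
    qed
    obtain cs where cs: "path cs" and maxl: "\<And>ds. path ds \<Longrightarrow> length ds \<le> length cs"
      using ex_has_greatest_nat[of path "[j]" length "card J + 1"] p0 bnd by blast
    define k where "k = length cs"
    have k1: "k \<ge> 1" using cs unfolding path_def k_def by (cases cs) auto
    define v where "v = cs ! (k - 1)"
    have vin: "v \<in> J" "v \<in> set cs" using cs k1 unfolding path_def v_def k_def by auto
    have closed: "q \<in> set cs" if "q \<in> J" "?adj v q" for q
    proof (rule ccontr)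
      assume nq: "q \<notin> set cs"
      have "path (cs @ [q])" unfolding path_def
      proof (intro conjI allI impI)
        show "distinct (cs @ [q])" using cs nq unfolding path_def by auto
        show "set (cs @ [q]) \<subseteq> J" using cs that unfolding path_def by auto
        fix m assume m: "Suc m < length (cs @ [q])"
        show "?adj ((cs @ [q]) ! m) ((cs @ [q]) ! Suc m)"
        proof (cases "Suc m < length cs")
          case True then show ?thesis using cs unfolding path_def by (auto simp: nth_append)
        next
          case False
          then have "m = k - 1" "Suc m = k" using m k1 unfolding k_def by auto
          then show ?thesis using that k1 unfolding v_def k_def by (auto simp: nth_append)
        qed
      qed simp
      then show False using maxl[of "cs @ [q]"] by simp
    qed
    show False
    proof (cases "k = 1")
      case True
      obtain p where p: "p \<in> J" "p \<noteq> v"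
      proof -
        have "J - {v} \<noteq> {}"
        proof
          assume "J - {v} = {}"
          then have "J \<subseteq> {v}" by auto
          then have "card J \<le> 1" using card_mono[of "{v}" J] by simp
          with cJ show False by simp
        qed
        then show ?thesis using that by blast
      qed
      obtain q where q: "q \<in> J" "q \<noteq> v" "?adj v q" using ex[OF vin(1) p(1) p(2)[symmetric]] by blast
      have "set cs = {v}" using True cs unfolding path_def k_def v_def
        by (cases cs) auto
      then show False using closed[OF q(1,3)] q(2) by auto
    next
      case False
      then have k2: "k \<ge> 2" using k1 by simp
      define u where "u = cs ! (k - 2)"
      have dcs: "distinct cs" using cs unfolding path_def by simp
      have uv: "u \<noteq> v" using dcs k2 unfolding u_def v_def k_def by (simp add: nth_eq_iff_index_eq)
      have uin: "u \<in> J" using cs k2 unfolding path_def u_def k_def by (auto intro: nth_mem)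
      obtain q where q: "q \<in> J" "q \<noteq> v" "q \<noteq> u" "?adj v q" using ex[OF vin(1) uin uv[symmetric]] by blast
      obtain jj where jj: "jj < k" "cs ! jj = q" using closed[OF q(1,4)] unfolding k_def by (metis in_set_conv_nth)
      have "jj \<noteq> k - 1" "jj \<noteq> k - 2" using jj q unfolding u_def v_def by auto
      then have jk: "jj + 3 \<le> k" using jj k2 by linarith
      define ds where "ds = drop jj cs"
      have lds: "length ds = k - jj" unfolding ds_def k_def by simp
      have dsn: "ds ! m = cs ! (jj + m)" if "m < length ds" for m
        using that unfolding ds_def by simp
      have "line_graph_has_cycle H"
        unfolding line_graph_has_cycle_def
      proof (intro exI[of _ ds] conjI allI impI)
        show "3 \<le> length ds" using lds jk by simp
        show "distinct ds" using dcs unfolding ds_def by simp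
        show "set ds \<subseteq> H" using cs JH unfolding ds_def path_def by (meson order_trans set_drop_subset)
        fix m assume m: "m < length ds"
        show "?adj (ds ! m) (ds ! ((m + 1) mod length ds))"
        proof (cases "m + 1 < length ds")
          case True
          then have "?adj (cs ! (jj + m)) (cs ! Suc (jj + m))"
            using cs lds unfolding path_def k_def by auto
          then show ?thesis using True dsn m by simp
        next
          case False
          then have "m + 1 = length ds" using m by simp
          then have jm: "jj + m = k - 1" using lds by simp
          from \<open>m + 1 = length ds\<close> have "(m + 1) mod length ds = 0" "ds ! m = v" "ds ! 0 = q"
            using dsn[of m] dsn[of 0] lds jk jj jm m unfolding v_def by auto
          then show ?thesis using q(4) by simp
        qed
      qed
      then show False using nc by simp
    qed
  qed
qed


lemma gossip_entry:
  assumes g: "clique_gossip n b C M" and r: "r < n * b" and c: "c < n * b"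
    and nc: "\<not> (r div b + 1 \<in> C \<and> c div b + 1 \<in> C)"
  shows "M $$ (r, c) = (if r = c then 1 else 0)"
proof -
  have "M $$ (r, c) = (if r div b + 1 = c div b + 1 \<and> r mod b = c mod b then 1 else 0)"
    using g r c nc unfolding clique_gossip_def Let_def by blast
  moreover have "(r div b + 1 = c div b + 1 \<and> r mod b = c mod b) \<longleftrightarrow> r = c"
    by (metis add_right_cancel div_mult_mod_eq)
  ultimately show ?thesis by simp
qed

lemma gossip_carrier: "clique_gossip n b C M \<Longrightarrow> M \<in> carrier_mat (n * b) (n * b)"
  unfolding clique_gossip_def by simp

lemma sum_delta_left: "r < (N::nat) \<Longrightarrow> (\<Sum>k = 0..<N. (if r = k then 1 else 0) * (f k :: real)) = f r"
proof -
  assume r: "r < N"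
  have "(\<Sum>k = 0..<N. (if r = k then 1 else 0) * f k) = (\<Sum>k \<in> {0..<N}. if r = k then f k else 0)"
    by (rule sum.cong) auto
  also have "\<dots> = f r" using r by (simp add: sum.delta')
  finally show ?thesis .
qed
lemma sum_delta_right: "c < (N::nat) \<Longrightarrow> (\<Sum>k = 0..<N. (f k :: real) * (if k = c then 1 else 0)) = f c"
proof -
  assume c: "c < N"
  have "(\<Sum>k = 0..<N. f k * (if k = c then 1 else 0)) = (\<Sum>k \<in> {0..<N}. if c = k then f k else 0)"
    by (rule sum.cong) auto
  also have "\<dots> = f c" using c by (simp add: sum.delta')
  finally show ?thesis .
qed

lemma gossip_prod_entry:
  assumes g1: "clique_gossip n b C M" and g2: "clique_gossip n b C' M'" and disj: "C \<inter> C' = {}"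
    and r: "r < n * b" and c: "c < n * b"
  shows "(M * M') $$ (r, c) = (if r div b + 1 \<notin> C then M' $$ (r, c)
           else if c div b + 1 \<notin> C' then M $$ (r, c) else 0)"
proof -
  let ?N = "n * b"
  have cM: "M \<in> carrier_mat ?N ?N" and cM': "M' \<in> carrier_mat ?N ?N"
    using g1 g2 gossip_carrier by auto
  have e: "(M * M') $$ (r, c) = (\<Sum>k = 0..<?N. M $$ (r, k) * M' $$ (k, c))"
    using cM cM' r c by (simp add: index_mult_mat scalar_prod_def row_def col_def)
  show ?thesis
  proof (cases "r div b + 1 \<in> C")
    case False
    have "(\<Sum>k = 0..<?N. M $$ (r, k) * M' $$ (k, c)) = (\<Sum>k = 0..<?N. (if r = k then 1 else 0) * M' $$ (k, c))"
      by (rule sum.cong, simp, subst gossip_entry[OF g1 r], use False in auto)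
    then show ?thesis using e False sum_delta_left[OF r] by simp
  next
    case rC: True
    show ?thesis
    proof (cases "c div b + 1 \<in> C'")
      case False
      have "(\<Sum>k = 0..<?N. M $$ (r, k) * M' $$ (k, c)) = (\<Sum>k = 0..<?N. M $$ (r, k) * (if k = c then 1 else 0))"
        by (rule sum.cong, simp, subst gossip_entry[OF g2 _ c], use False in auto)
      then show ?thesis using e False rC sum_delta_right[OF c] by simp
    next
      case cC: True
      have "(\<Sum>k = 0..<?N. M $$ (r, k) * M' $$ (k, c)) = (\<Sum>k = 0..<?N. 0)"
      proof (rule sum.cong)
        fix k assume k: "k \<in> {0..<?N}"
        show "M $$ (r, k) * M' $$ (k, c) = 0"
        proof (cases "k div b + 1 \<in> C")
          case True
          then have "k div b + 1 \<notin> C'" using disj by blast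
          then have "M' $$ (k, c) = (if k = c then 1 else 0)"
            using gossip_entry[OF g2 _ c] k by auto
          moreover have "k \<noteq> c" using True cC disj by blast
          ultimately show ?thesis by simp
        next
          case False
          then have "M $$ (r, k) = (if r = k then 1 else 0)"
            using gossip_entry[OF g1 r] k by auto
          moreover have "r \<noteq> k" using False rC by blast
          ultimately show ?thesis by simp
        qed
      qed simp
      then show ?thesis using e rC cC by simp
    qed
  qed
qed

lemma gossip_commute:
  assumes g1: "clique_gossip n b C M" and g2: "clique_gossip n b C' M'" and disj: "C \<inter> C' = {}"
  shows "M * M' = M' * M"
proof -
  let ?N = "n * b"
  have cM: "M \<in> carrier_mat ?N ?N" and cM': "M' \<in> carrier_mat ?N ?N"
    using g1 g2 gossip_carrier by auto
  have disj': "C' \<inter> C = {}" using disj by blast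
  show ?thesis
  proof (rule eq_matI)
    fix r c assume r: "r < dim_row (M' * M)" and c: "c < dim_col (M' * M)"
    then have r: "r < ?N" and c: "c < ?N" using cM cM' by auto
    note E1 = gossip_prod_entry[OF g1 g2 disj r c]
    note E2 = gossip_prod_entry[OF g2 g1 disj' r c]
    note a1 = gossip_entry[OF g1 r c] and a2 = gossip_entry[OF g2 r c]
    show "(M * M') $$ (r, c) = (M' * M) $$ (r, c)"
      unfolding E1 E2 using a1 a2 disj by (cases "r = c") auto
  qed (use cM cM' in auto)
qed

lemma ordered_prod_lp: "ordered_prod N M f d = lp N M (map f (rev [1..<Suc d]))"
  by (induction d) auto

theorem corollary1:
  fixes n b d :: nat and E :: "nat \<Rightarrow> nat \<Rightarrow> bool" and H :: "nat set set"
    and Q :: "nat \<Rightarrow> nat set" and M :: "nat set \<Rightarrow> real mat" and \<pi> :: "nat \<Rightarrow> nat"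
  assumes "b \<ge> 1"
    and "simple_graph n E"
    and "clique_coverage n E H"
    and "card H = d"
    and "bij_betw Q {1..d} H"
    and "\<forall>C\<in>H. clique_gossip n b C (M C)"
    and "\<not> line_graph_has_cycle H"
    and "\<pi> permutes {1..d}"
  shows "char_poly (ordered_prod (n * b) M Q d) = char_poly (ordered_prod (n * b) M (Q \<circ> \<pi>) d)"
proof -
  have fin: "finite H" using assms(3) unfolding clique_coverage_def by simp
  have Qp: "bij_betw (Q \<circ> \<pi>) {1..d} H"
    using bij_betw_trans[OF permutes_imp_bij[OF assms(8)] assms(5)] .
  have dist: "distinct (map f (rev [1..<Suc d]))" "set (map f (rev [1..<Suc d])) = H"
    if "bij_betw f {1..d} H" for f
  proof -
    have s: "set (rev [1..<Suc d]) = {1..d}" by auto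
    show "distinct (map f (rev [1..<Suc d]))" using that
      unfolding distinct_map distinct_rev s bij_betw_def by simp
    show "set (map f (rev [1..<Suc d])) = H" using that unfolding set_map s bij_betw_def by simp
  qed
  show ?thesis unfolding ordered_prod_lp
  proof (rule forest_charpoly[of H "line_adj H"])
    show "degen (line_adj H) H" by (rule acyclic_degen[OF fin assms(7)])
    show "\<forall>i\<in>H. M i \<in> carrier_mat (n * b) (n * b)" using assms(6) gossip_carrier by blast
    show "\<forall>i\<in>H. \<forall>j\<in>H. i \<noteq> j \<longrightarrow> \<not> line_adj H i j \<longrightarrow> M i * M j = M j * M i"
    proof (intro ballI impI)
      fix i j assume ij: "i \<in> H" "j \<in> H" "i \<noteq> j" "\<not> line_adj H i j"
      then have "i \<inter> j = {}" unfolding line_adj_def by blast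
      then show "M i * M j = M j * M i" using gossip_commute assms(6) ij by blast
    qed
  qed (use fin dist[OF assms(5)] dist[OF Qp] in auto)
qed

end
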